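(* Let $H=(V,E)$ be a hypergraph, and let $L$ be a graph satisfying one of the following: (a) $\deg_H(v)\le 2$ for all $v\in V$ and $L=\mathcal L(H)$; or (b) $L=\mathcal L_2^*(H)$ and $L$ is bipartite; or (c) $L=\mathcal L_3^*(H)$. Then $H$ is eulerian whenever $L$ has a Hamilton cycle, and $H$ is quasi-eulerian whenever $L$ has a $2$-factor. Moreover, in cases (b) and (c), $H$ is quasi-eulerian whenever $L$ has a spanning subgraph each of whose connected components is $1$-regular or $2$-regular.
   Context: A hypergraph $H=(V,E)$ consists of a finite nonempty vertex set $V$, a finite edge set $E$ disjoint from $V$, and an incidence function assigning to each edge $e\in E$ a subset of $V$ (also denoted $e$); distinct edges may have the same vertex set. Hypergraphs are assumed to have no empty edges. The degree $\deg_H(v)$ is the number of edges containing $v$. A walk is a sequence $W=v_0e_1v_1e_2\cdots e_kv_k$ with $v_i\in V$, $e_i\in E$, such that for each $i$, $v_{i-1}\ne v_i$ and $v_{i-1},v_i\in e_i$; the $v_i$ are its anchors. $W$ is closed if $k\ge 2$ and $v_0=v_k$; it is a strict trail if $e_1,\dots,e_k$ are pairwise distinct. An Euler tour of $H$ is a closed strict trail traversing every edge of $H$; an Euler family of $H$ is a family of closed strict trails such that every edge of $H$ lies in exactly one trail and no two trails have a common anchor. $H$ is eulerian (quasi-eulerian) if it has an Euler tour (Euler family). The intersection graph $\mathcal L(H)$ is the simple graph with vertex set $E$ in which distinct $e,e'$ are adjacent iff $e\cap e'\ne\emptyset$; for a positive integer $\ell$, $\mathcal L_\ell^*(H)$ is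 the simple graph with vertex set $E$ in which distinct $e,e'$ are adjacent iff $|e\cap e'|\ge \ell$. *)

theory Defs
  imports Main
begin

text \<open>A hypergraph is given by a vertex set V (of type 'v), an edge set E (of type 'e,
  hence disjoint from V) and an incidence function inc assigning to each edge its vertex set.\<close>

definition hypergraph :: "'v set \<Rightarrow> 'e set \<Rightarrow> ('e \<Rightarrow> 'v set) \<Rightarrow> bool" where
  "hypergraph V E inc \<longleftrightarrow> finite V \<and> V \<noteq> {} \<and> finite E \<and>
     (\<forall>e\<in>E. inc e \<subseteq> V \<and> inc e \<noteq> {})"

definition hdeg :: "'e set \<Rightarrow> ('e \<Rightarrow> 'v set) \<Rightarrow> 'v \<Rightarrow> nat" where
  "hdeg E inc v = card {e\<in>E. v \<in> inc e}"

text \<open>A walk v0 e1 v1 ... ek vk is represented by the anchor list vs = [v0,...,vk]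
  and the edge list es = [e1,...,ek].\<close>

definition is_walk :: "'v set \<Rightarrow> 'e set \<Rightarrow> ('e \<Rightarrow> 'v set) \<Rightarrow> 'v list \<Rightarrow> 'e list \<Rightarrow> bool" where
  "is_walk V E inc vs es \<longleftrightarrow> length vs = Suc (length es) \<and> set vs \<subseteq> V \<and> set es \<subseteq> E \<and>
     (\<forall>i < length es. vs ! i \<noteq> vs ! Suc i \<and> vs ! i \<in> inc (es ! i) \<and> vs ! Suc i \<in> inc (es ! i))"

definition closed_strict_trail :: "'v set \<Rightarrow> 'e set \<Rightarrow> ('e \<Rightarrow> 'v set) \<Rightarrow> 'v list \<Rightarrow> 'e list \<Rightarrow> bool" where
  "closed_strict_trail V E inc vs es \<longleftrightarrow> is_walk V E inc vs es \<and> length es \<ge> 2 \<and>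
     hd vs = last vs \<and> distinct es"

definition eulerian :: "'v set \<Rightarrow> 'e set \<Rightarrow> ('e \<Rightarrow> 'v set) \<Rightarrow> bool" where
  "eulerian V E inc \<longleftrightarrow> (\<exists>vs es. closed_strict_trail V E inc vs es \<and> set es = E)"

definition euler_family :: "'v set \<Rightarrow> 'e set \<Rightarrow> ('e \<Rightarrow> 'v set) \<Rightarrow> ('v list \<times> 'e list) set \<Rightarrow> bool" where
  "euler_family V E inc F \<longleftrightarrow> finite F \<and>
     (\<forall>(vs, es)\<in>F. closed_strict_trail V E inc vs es) \<and>
     (\<forall>e\<in>E. \<exists>!T\<in>F. e \<in> set (snd T)) \<and>
     (\<forall>T\<in>F. \<forall>T'\<in>F. T \<noteq> T' \<longrightarrow> set (fst T) \<inter> set (fst T') = {})"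

definition quasi_eulerian :: "'v set \<Rightarrow> 'e set \<Rightarrow> ('e \<Rightarrow> 'v set) \<Rightarrow> bool" where
  "quasi_eulerian V E inc \<longleftrightarrow> (\<exists>F. euler_family V E inc F)"

definition intersection_graph :: "('e \<Rightarrow> 'v set) \<Rightarrow> 'e \<Rightarrow> 'e \<Rightarrow> bool" where
  "intersection_graph inc e e' \<longleftrightarrow> e \<noteq> e' \<and> inc e \<inter> inc e' \<noteq> {}"

definition intersection_graph_star :: "nat \<Rightarrow> ('e \<Rightarrow> 'v set) \<Rightarrow> 'e \<Rightarrow> 'e \<Rightarrow> bool" where
  "intersection_graph_star l inc e e' \<longleftrightarrow> e \<noteq> e' \<and> card (inc e \<inter> inc e') \<ge> l"

text \<open>Simple graphs on a vertex set X with symmetric irreflexive adjacency adj.\<close>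

definition bipartite :: "'a set \<Rightarrow> ('a \<Rightarrow> 'a \<Rightarrow> bool) \<Rightarrow> bool" where
  "bipartite X adj \<longleftrightarrow> (\<exists>A\<subseteq>X. \<forall>x\<in>X. \<forall>y\<in>X. adj x y \<longrightarrow> (x \<in> A \<longleftrightarrow> y \<notin> A))"

definition hamilton_cycle :: "'a set \<Rightarrow> ('a \<Rightarrow> 'a \<Rightarrow> bool) \<Rightarrow> 'a list \<Rightarrow> bool" where
  "hamilton_cycle X adj cs \<longleftrightarrow> length cs \<ge> 3 \<and> distinct cs \<and> set cs = X \<and>
     (\<forall>i < length cs - 1. adj (cs ! i) (cs ! Suc i)) \<and> adj (last cs) (hd cs)"

definition has_hamilton_cycle :: "'a set \<Rightarrow> ('a \<Rightarrow> 'a \<Rightarrow> bool) \<Rightarrow> bool" where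
  "has_hamilton_cycle X adj \<longleftrightarrow> (\<exists>cs. hamilton_cycle X adj cs)"

text \<open>A spanning subgraph is given by its edge set S, a set of 2-element sets of vertices
  that are edges of the graph.\<close>

definition spanning_edges :: "'a set \<Rightarrow> ('a \<Rightarrow> 'a \<Rightarrow> bool) \<Rightarrow> 'a set set \<Rightarrow> bool" where
  "spanning_edges X adj S \<longleftrightarrow> (\<forall>s\<in>S. \<exists>x\<in>X. \<exists>y\<in>X. adj x y \<and> s = {x, y})"

definition sdeg :: "'a set set \<Rightarrow> 'a \<Rightarrow> nat" where
  "sdeg S x = card {y. {x, y} \<in> S}"

definition has_2_factor :: "'a set \<Rightarrow> ('a \<Rightarrow> 'a \<Rightarrow> bool) \<Rightarrow> bool" where
  "has_2_factor X adj \<longleftrightarrow> (\<exists>S. spanning_edges X adj S \<and> (\<forall>x\<in>X. sdeg S x = 2))"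

definition sreach :: "'a set set \<Rightarrow> 'a \<Rightarrow> 'a \<Rightarrow> bool" where
  "sreach S x y \<longleftrightarrow> (x, y) \<in> {(a, b). {a, b} \<in> S}\<^sup>*"

definition has_1_2_regular_spanning :: "'a set \<Rightarrow> ('a \<Rightarrow> 'a \<Rightarrow> bool) \<Rightarrow> bool" where
  "has_1_2_regular_spanning X adj \<longleftrightarrow> (\<exists>S. spanning_edges X adj S \<and>
     (\<forall>x\<in>X. (\<forall>y. sreach S x y \<longrightarrow> sdeg S y = 1) \<or> (\<forall>y. sreach S x y \<longrightarrow> sdeg S y = 2)))"

end

theory Submission
  imports Defs
begin


lemma walk_take:
  assumes "is_walk V E inc vs es" "i \<le> length es"
  shows "is_walk V E inc (take (Suc i) vs) (take i es)"
  using assms unfolding is_walk_def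
  by (auto simp: min_def dest: in_set_takeD)

lemma walk_drop:
  assumes "is_walk V E inc vs es" "i \<le> length es"
  shows "is_walk V E inc (drop i vs) (drop i es)"
  using assms unfolding is_walk_def
  by (auto dest: in_set_dropD)

lemma app_nth_aux:
  assumes "length vs1 = Suc l1" "last vs1 = hd vs2" "vs2 \<noteq> []"
  shows "(vs1 @ tl vs2) ! (l1 + j) = vs2 ! j"
proof (cases j)
  case 0
  then show ?thesis using assms
    by (metis add_0_right diff_Suc_1 hd_conv_nth last_conv_nth le_add2 lessI list.size(3) nat.simps(3) nth_append_left)
next
  case (Suc j')
  then show ?thesis using assms
    by (cases vs2) (auto simp: nth_append)
qed

lemma walk_append:
  assumes w1: "is_walk V E inc vs1 es1" and w2: "is_walk V E inc vs2 es2" and l: "last vs1 = hd vs2"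
  shows "is_walk V E inc (vs1 @ tl vs2) (es1 @ es2)"
proof -
  have len1: "length vs1 = Suc (length es1)" and len2: "length vs2 = Suc (length es2)"
    using w1 w2 by (auto simp: is_walk_def)
  have ne: "vs2 \<noteq> []" using len2 by auto
  have A: "\<And>j. (vs1 @ tl vs2) ! (length es1 + j) = vs2 ! j"
    using app_nth_aux[OF len1 l ne] .
  have C: "\<forall>i < length (es1 @ es2). (vs1 @ tl vs2) ! i \<noteq> (vs1 @ tl vs2) ! Suc i \<and>
          (vs1 @ tl vs2) ! i \<in> inc ((es1 @ es2) ! i) \<and> (vs1 @ tl vs2) ! Suc i \<in> inc ((es1 @ es2) ! i)"
  proof (intro allI impI)
    fix i assume i: "i < length (es1 @ es2)"
    show "(vs1 @ tl vs2) ! i \<noteq> (vs1 @ tl vs2) ! Suc i \<and>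
          (vs1 @ tl vs2) ! i \<in> inc ((es1 @ es2) ! i) \<and> (vs1 @ tl vs2) ! Suc i \<in> inc ((es1 @ es2) ! i)"
    proof (cases "i < length es1")
      case True
      then show ?thesis using w1 len1 by (simp add: nth_append is_walk_def)
    next
      case False
      then obtain j where j: "i = length es1 + j" "j < length es2" using i
        by (metis add_diff_inverse_nat length_append nat_add_left_cancel_less)
      have "(vs1 @ tl vs2) ! i = vs2 ! j" using A j by simp
      moreover have "(vs1 @ tl vs2) ! Suc i = vs2 ! Suc j" using A[of "Suc j"] j by simp
      moreover have "(es1 @ es2) ! i = es2 ! j" using j by (simp add: nth_append)
      ultimately show ?thesis using w2 j by (simp add: is_walk_def)
    qed
  qed
  have "length (vs1 @ tl vs2) = Suc (length (es1 @ es2))" using len1 len2 by simp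
  moreover have "set (vs1 @ tl vs2) \<subseteq> V" using w1 w2 ne by (auto simp: is_walk_def dest: list.set_sel(2))
  moreover have "set (es1 @ es2) \<subseteq> E" using w1 w2 by (auto simp: is_walk_def)
  ultimately show ?thesis using C unfolding is_walk_def by blast
qed

lemma rotate_trail:
  assumes T: "closed_strict_trail V E inc vs es" and i: "i \<le> length es"
  shows "closed_strict_trail V E inc (drop i vs @ tl (take (Suc i) vs)) (drop i es @ take i es)
         \<and> hd (drop i vs @ tl (take (Suc i) vs)) = vs ! i
         \<and> set (drop i vs @ tl (take (Suc i) vs)) \<subseteq> set vs
         \<and> set (drop i es @ take i es) = set es"
proof -
  have w: "is_walk V E inc vs es" and l2: "length es \<ge> 2" and hl: "hd vs = last vs" and d: "distinct es"
    using T by (auto simp: closed_strict_trail_def)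
  have len: "length vs = Suc (length es)" using w by (simp add: is_walk_def)
  have il: "i < length vs" using i len by simp
  have w1: "is_walk V E inc (drop i vs) (drop i es)" using walk_drop[OF w i] .
  have w2: "is_walk V E inc (take (Suc i) vs) (take i es)" using walk_take[OF w i] .
  have lst: "last (drop i vs) = hd (take (Suc i) vs)"
    using il hl by (metis drop_eq_Nil last_drop leD Nil_is_append_conv append_take_drop_id hd_append2 take_eq_Nil Zero_not_Suc)
  have W: "is_walk V E inc (drop i vs @ tl (take (Suc i) vs)) (drop i es @ take i es)"
    using walk_append[OF w1 w2 lst] .
  have hd1: "hd (drop i vs @ tl (take (Suc i) vs)) = vs ! i"
    using il by (simp add: hd_drop_conv_nth)
  have last1: "last (drop i vs @ tl (take (Suc i) vs)) = vs ! i"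
  proof (cases i)
    case 0
    then show ?thesis using hl len by (cases vs) auto
  next
    case (Suc j)
    have ne: "tl (take (Suc i) vs) \<noteq> []" using Suc il by (cases vs) auto
    have "last (tl (take (Suc i) vs)) = last (take (Suc i) vs)" using ne by (simp add: last_tl)
    also have "\<dots> = vs ! i" using il by (simp add: take_Suc_conv_app_nth)
    finally show ?thesis using ne by simp
  qed
  have dd: "distinct (drop i es @ take i es)"
    using d by (metis append_take_drop_id distinct_append inf_commute)
  have se: "set (drop i es @ take i es) = set es"
    by (metis append_take_drop_id set_append sup_commute)
  have "set (tl (take (Suc i) vs)) \<subseteq> set (take (Suc i) vs)" by (cases "take (Suc i) vs") auto
  then have sv: "set (drop i vs @ tl (take (Suc i) vs)) \<subseteq> set vs"
    using set_take_subset set_drop_subset by fastforce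
  have "length (drop i es @ take i es) = length es" using i by simp
  then show ?thesis using W hd1 last1 dd se sv l2 unfolding closed_strict_trail_def by simp
qed

lemma merge_trails:
  assumes T1: "closed_strict_trail V E inc vs1 es1" and T2: "closed_strict_trail V E inc vs2 es2"
    and disj: "set es1 \<inter> set es2 = {}" and v: "v \<in> set vs1" "v \<in> set vs2"
  shows "\<exists>vs es. closed_strict_trail V E inc vs es \<and> set es = set es1 \<union> set es2"
proof -
  have len1: "length vs1 = Suc (length es1)" and len2: "length vs2 = Suc (length es2)"
    using T1 T2 by (auto simp: closed_strict_trail_def is_walk_def)
  obtain i where i: "i < length vs1" "vs1 ! i = v" using v by (metis in_set_conv_nth)
  obtain j where j: "j < length vs2" "vs2 ! j = v" using v by (metis in_set_conv_nth)
  define r1 where "r1 = drop i vs1 @ tl (take (Suc i) vs1)"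
  define f1 where "f1 = drop i es1 @ take i es1"
  define r2 where "r2 = drop j vs2 @ tl (take (Suc j) vs2)"
  define f2 where "f2 = drop j es2 @ take j es2"
  have R1: "closed_strict_trail V E inc r1 f1" "hd r1 = v" "set f1 = set es1"
    using rotate_trail[OF T1, of i] i len1 unfolding r1_def f1_def by auto
  have R2: "closed_strict_trail V E inc r2 f2" "hd r2 = v" "set f2 = set es2"
    using rotate_trail[OF T2, of j] j len2 unfolding r2_def f2_def by auto
  have w1: "is_walk V E inc r1 f1" and w2: "is_walk V E inc r2 f2"
    using R1 R2 by (auto simp: closed_strict_trail_def)
  have l1: "last r1 = hd r2" using R1 R2 by (simp add: closed_strict_trail_def)
  have W: "is_walk V E inc (r1 @ tl r2) (f1 @ f2)" using walk_append[OF w1 w2 l1] .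
  have lr2: "length r2 = Suc (length f2)" "length f2 \<ge> 2" using R2 by (auto simp: closed_strict_trail_def is_walk_def)
  have lr1: "length r1 = Suc (length f1)" "length f1 \<ge> 2" using R1 by (auto simp: closed_strict_trail_def is_walk_def)
  have ne: "tl r2 \<noteq> []" using lr2 by (cases r2) auto
  have "hd (r1 @ tl r2) = v" using R1 lr1 by (cases r1) auto
  moreover have "last (r1 @ tl r2) = v"
    using ne R2 by (simp add: last_tl closed_strict_trail_def)
  moreover have "distinct (f1 @ f2)" using R1 R2 disj by (auto simp: closed_strict_trail_def)
  moreover have "length (f1 @ f2) \<ge> 2" using lr1 by simp
  ultimately have "closed_strict_trail V E inc (r1 @ tl r2) (f1 @ f2)"
    using W unfolding closed_strict_trail_def by simp
  then show ?thesis using R1 R2 by (intro exI[of _ "r1 @ tl r2"] exI[of _ "f1 @ f2"]) auto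
qed

lemma ex1_beq: "\<exists>!x\<in>A. P x \<Longrightarrow> x \<in> A \<Longrightarrow> P x \<Longrightarrow> y \<in> A \<Longrightarrow> P y \<Longrightarrow> x = y"
  by blast

lemma family_qe_aux:
  "\<forall>F. card F = n \<longrightarrow> finite F \<longrightarrow> (\<forall>(vs, es)\<in>F. closed_strict_trail V E inc vs es) \<longrightarrow>
     (\<forall>e\<in>E. \<exists>!T\<in>F. e \<in> set (snd T)) \<longrightarrow> quasi_eulerian V E inc"
proof (induction n rule: less_induct)
  case (less n)
  show ?case
  proof (intro allI impI)
    fix F :: "('a list \<times> 'b list) set"
    assume cF: "card F = n" and fin: "finite F" and tr: "\<forall>(vs, es)\<in>F. closed_strict_trail V E inc vs es"
      and un: "\<forall>e\<in>E. \<exists>!T\<in>F. e \<in> set (snd T)"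
    show "quasi_eulerian V E inc"
    proof (cases "\<forall>T\<in>F. \<forall>T'\<in>F. T \<noteq> T' \<longrightarrow> set (fst T) \<inter> set (fst T') = {}")
      case True
      then have "euler_family V E inc F" using fin tr un unfolding euler_family_def by blast
      then show ?thesis unfolding quasi_eulerian_def by blast
    next
      case False
      then obtain T1 T2 where T: "T1 \<in> F" "T2 \<in> F" "T1 \<noteq> T2" "set (fst T1) \<inter> set (fst T2) \<noteq> {}"
        by blast
      obtain vs1 es1 where t1: "T1 = (vs1, es1)" by (cases T1)
      obtain vs2 es2 where t2: "T2 = (vs2, es2)" by (cases T2)
      have C1: "closed_strict_trail V E inc vs1 es1" using tr T t1 by auto
      have C2: "closed_strict_trail V E inc vs2 es2" using tr T t2 by auto
      obtain v where v: "v \<in> set vs1" "v \<in> set vs2" using T t1 t2 by auto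
      have disj: "set es1 \<inter> set es2 = {}"
      proof (rule ccontr)
        assume "set es1 \<inter> set es2 \<noteq> {}"
        then obtain e where e: "e \<in> set es1" "e \<in> set es2" by blast
        have "e \<in> E" using C1 e by (auto simp: closed_strict_trail_def is_walk_def)
        then have "\<exists>!T\<in>F. e \<in> set (snd T)" using un by blast
        then have "T1 = T2" by (rule ex1_beq) (use T t1 t2 e in auto)
        then show False using T by simp
      qed
      obtain vs es where M: "closed_strict_trail V E inc vs es" "set es = set es1 \<union> set es2"
        using merge_trails[OF C1 C2 disj v] by blast
      define F' where "F' = insert (vs, es) (F - {T1, T2})"
      have finF': "finite F'" using fin unfolding F'_def by simp
      have c2: "card (F - {T1, T2}) = card F - 2" using T fin by (simp add: card_Diff_subset)
      have "card {T1, T2} \<le> card F" using T fin by (intro card_mono) auto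
      then have ge: "card F \<ge> 2" using T by simp
      have "card F' \<le> Suc (card (F - {T1, T2}))" unfolding F'_def using fin by (simp add: card_insert_if)
      then have lt: "card F' < n" using c2 ge cF by linarith
      have trF': "\<forall>(vs, es)\<in>F'. closed_strict_trail V E inc vs es" using tr M unfolding F'_def by auto
      have unF': "\<forall>e\<in>E. \<exists>!T\<in>F'. e \<in> set (snd T)"
      proof
        fix e assume eE: "e \<in> E"
        have ex: "\<exists>!T\<in>F. e \<in> set (snd T)" using un eE by blast
        then obtain T0 where T0a: "T0 \<in> F" "e \<in> set (snd T0)" by blast
        have T0b: "\<And>T. T \<in> F \<Longrightarrow> e \<in> set (snd T) \<Longrightarrow> T = T0"
          using ex1_beq[OF ex] T0a by blast
        note T0 = T0a T0b
        show "\<exists>!T\<in>F'. e \<in> set (snd T)"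
        proof (cases "T0 = T1 \<or> T0 = T2")
          case True
          then have "snd T0 = es1 \<or> snd T0 = es2" using t1 t2 by auto
          then have "e \<in> set es1 \<union> set es2" using T0(2) by auto
          then have ein: "e \<in> set es" using M(2) by simp
          have m: "(vs, es) \<in> F'" unfolding F'_def by simp
          have U: "\<And>T. T \<in> F' \<Longrightarrow> e \<in> set (snd T) \<Longrightarrow> T = (vs, es)"
          proof -
            fix T assume TF: "T \<in> F'" and eT: "e \<in> set (snd T)"
            show "T = (vs, es)"
            proof (rule ccontr)
              assume ne: "T \<noteq> (vs, es)"
              then have TF2: "T \<in> F" "T \<noteq> T1" "T \<noteq> T2" using TF unfolding F'_def by auto
              have "T = T0" using T0b[OF TF2(1) eT] .
              then show False using TF2 True by simp
            qed
          qed
          show ?thesis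
          proof (rule ex1I[of _ "(vs, es)"])
            show "(vs, es) \<in> F' \<and> e \<in> set (snd (vs, es))" using m ein by simp
          next
            fix y assume "y \<in> F' \<and> e \<in> set (snd y)"
            then show "y = (vs, es)" using U by blast
          qed
        next
          case False
          have nin: "e \<notin> set es"
          proof
            assume "e \<in> set es"
            then have "e \<in> set es1 \<or> e \<in> set es2" using M(2) by simp
            then have "e \<in> set (snd T1) \<or> e \<in> set (snd T2)" using t1 t2 by simp
            then have "T1 = T0 \<or> T2 = T0" using T0b T(1,2) by blast
            then show False using False by blast
          qed
          have m: "T0 \<in> F'" unfolding F'_def using T0a(1) False by simp
          have U: "\<And>T. T \<in> F' \<Longrightarrow> e \<in> set (snd T) \<Longrightarrow> T = T0"
          proof -
            fix T assume TF: "T \<in> F'" and eT: "e \<in> set (snd T)"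
            have "T \<noteq> (vs, es)" using nin eT by auto
            then have "T \<in> F" using TF unfolding F'_def by simp
            then show "T = T0" using T0b eT by simp
          qed
          show ?thesis
          proof (rule ex1I[of _ T0])
            show "T0 \<in> F' \<and> e \<in> set (snd T0)" using m T0a(2) by simp
          next
            fix y assume "y \<in> F' \<and> e \<in> set (snd y)"
            then show "y = T0" using U by blast
          qed
        qed
      qed
      show ?thesis using less.IH[OF lt] finF' trF' unF' by blast
    qed
  qed
qed

lemma family_qe:
  assumes "finite F" "\<forall>(vs, es)\<in>F. closed_strict_trail V E inc vs es" "\<forall>e\<in>E. \<exists>!T\<in>F. e \<in> set (snd T)"
  shows "quasi_eulerian V E inc"
  using family_qe_aux assms by blast



lemma trail_of_cycle:
  assumes H: "hypergraph V E inc" and d: "distinct c" and k: "2 \<le> length c" and sub: "set c \<subseteq> E"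
    and ga: "\<forall>i<length c. a i \<in> inc (c!i) \<and> a i \<in> inc (c!((i+1) mod length c)) \<and> a i \<noteq> a ((i+1) mod length c)"
  shows "closed_strict_trail V E inc (a (length c - 1) # map a [0..<length c]) c"
proof -
  let ?k = "length c"
  let ?vs = "a (?k - 1) # map a [0..<?k]"
  have incV: "\<And>e. e \<in> E \<Longrightarrow> inc e \<subseteq> V" using H by (auto simp: hypergraph_def)
  have S1: "\<And>i. i < ?k \<Longrightarrow> ?vs ! Suc i = a i" by simp
  have S0: "\<And>i. i < ?k \<Longrightarrow> ?vs ! i \<in> inc (c!i) \<and> ?vs ! i \<noteq> a i"
  proof -
    fix i assume i: "i < ?k"
    show "?vs ! i \<in> inc (c!i) \<and> ?vs ! i \<noteq> a i"
    proof (cases i)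
      case 0
      have "?k - 1 + 1 = ?k" using k by simp
      then have "(?k - 1 + 1) mod ?k = 0" by simp
      then show ?thesis using ga[rule_format, of "?k - 1"] k 0 by auto
    next
      case (Suc j)
      have "(j + 1) mod ?k = i" using i Suc by simp
      then show ?thesis using ga[rule_format, of j] i Suc by auto
    qed
  qed
  have walk: "is_walk V E inc ?vs c"
    unfolding is_walk_def
  proof (intro conjI)
    show "length ?vs = Suc ?k" by simp
    show "set c \<subseteq> E" using sub .
    show "set ?vs \<subseteq> V"
    proof
      fix v assume "v \<in> set ?vs"
      then obtain i where i: "i < ?k" "v = a i" using k
        by (auto simp: image_iff)  
      then have "v \<in> inc (c!i)" using ga by auto
      moreover have "c!i \<in> E" using sub i by auto
      ultimately show "v \<in> V" using incV by auto
    qed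
    show "\<forall>i<?k. ?vs ! i \<noteq> ?vs ! Suc i \<and> ?vs ! i \<in> inc (c ! i) \<and> ?vs ! Suc i \<in> inc (c ! i)"
      using S0 S1 ga by auto
  qed
  have "hd ?vs = last ?vs" using k by (simp add: last_map)
  then show ?thesis using walk d k unfolding closed_strict_trail_def by simp
qed



primrec greedy :: "'a \<Rightarrow> (nat \<Rightarrow> 'a \<Rightarrow> 'a \<Rightarrow> bool) \<Rightarrow> nat \<Rightarrow> 'a" where
  "greedy a0 Q 0 = a0"
| "greedy a0 Q (Suc i) = (SOME x. Q i (greedy a0 Q i) x)"

lemma greedy_step: "(\<And>y. \<exists>x. Q i y x) \<Longrightarrow> Q i (greedy a0 Q i) (greedy a0 Q (Suc i))"
  by (simp add: someI_ex)

lemma card2_other: "2 \<le> card A \<Longrightarrow> \<exists>x\<in>A. x \<noteq> y"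
proof (rule ccontr)
  assume c: "2 \<le> card A" and "\<not> (\<exists>x\<in>A. x \<noteq> y)"
  then have "A \<subseteq> {y}" by auto
  then have "card A \<le> card {y}" by (intro card_mono) auto
  then have "card A \<le> 1" by simp
  then show False using c by simp
qed

lemma card3_other: "3 \<le> card A \<Longrightarrow> \<exists>x\<in>A. x \<noteq> y \<and> x \<noteq> z"
proof (rule ccontr)
  assume c: "3 \<le> card A" and "\<not> (\<exists>x\<in>A. x \<noteq> y \<and> x \<noteq> z)"
  then have "A \<subseteq> {y, z}" by auto
  then have "card A \<le> card {y, z}" by (intro card_mono) auto
  also have "\<dots> \<le> 2" by (simp add: card_insert_le_m1)
  finally show False using c by simp
qed

definition goodch :: "nat \<Rightarrow> (nat \<Rightarrow> 'a set) \<Rightarrow> (nat \<Rightarrow> 'a) \<Rightarrow> bool" where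
  "goodch k Ls a \<longleftrightarrow> (\<forall>i<k. a i \<in> Ls i \<and> a i \<noteq> a ((i+1) mod k))"

lemma choice3:
  assumes k: "2 \<le> k" and c: "\<forall>i<k. 3 \<le> card (Ls i)"
  shows "\<exists>a. goodch k Ls a"
proof -
  have c0: "3 \<le> card (Ls 0)" using c k by simp
  obtain x0 where x0: "x0 \<in> Ls 0" using card3_other[OF c0, of undefined undefined] by blast
  define Q where "Q = (\<lambda>i y x. (Suc i < k \<longrightarrow> x \<in> Ls (Suc i)) \<and> x \<noteq> y \<and> x \<noteq> x0)"
  define b where "b = greedy x0 Q"
  have ex: "\<And>i y. \<exists>x. Q i y x"
  proof -
    fix i y
    show "\<exists>x. Q i y x"
    proof (cases "Suc i < k")
      case True
      then have "3 \<le> card (Ls (Suc i))" using c by simp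
      then obtain x where "x \<in> Ls (Suc i)" "x \<noteq> y" "x \<noteq> x0" using card3_other[of "Ls (Suc i)" y x0] by blast
      then show ?thesis unfolding Q_def by blast
    next
      case False
      obtain x where "x \<in> Ls 0" "x \<noteq> y" "x \<noteq> x0" using card3_other[OF c0, of y x0] by blast
      then show ?thesis unfolding Q_def using False by blast
    qed
  qed
  have st: "\<And>i. Q i (b i) (b (Suc i))" unfolding b_def by (rule greedy_step[OF ex])
  have mem: "\<And>i. i < k \<Longrightarrow> b i \<in> Ls i"
  proof -
    fix i assume "i < k"
    then show "b i \<in> Ls i" using st x0 unfolding Q_def b_def by (cases i) auto
  qed
  have "goodch k Ls b" unfolding goodch_def
  proof (intro allI impI conjI)
    fix i assume i: "i < k"
    show "b i \<in> Ls i" using mem i .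
    show "b i \<noteq> b ((i+1) mod k)"
    proof (cases "i + 1 < k")
      case True
      then show ?thesis using st[of i] unfolding Q_def by auto
    next
      case False
      then have i1: "i + 1 = k" using i by simp
      then obtain j where j: "i = Suc j" using k by (cases i) auto
      have "b i \<noteq> x0" using st[of j] j unfolding Q_def by auto
      moreover have "b 0 = x0" unfolding b_def by simp
      ultimately show ?thesis using i1 by simp
    qed
  qed
  then show ?thesis by blast
qed

lemma rot_choice:
  assumes s: "s < k" and g: "goodch k (\<lambda>i. Ls ((i + s) mod k)) b"
  shows "goodch k Ls (\<lambda>i. b ((i + (k - s)) mod k))"
  unfolding goodch_def
proof (intro allI impI conjI)
  fix i assume i: "i < k"
  let ?j = "(i + (k - s)) mod k"
  have jk: "?j < k" using i by simp
  have "(?j + s) mod k = (i + (k - s) + s) mod k" by (simp add: mod_simps)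
  also have "\<dots> = (i + k) mod k" using s by simp
  also have "\<dots> = i" using i by simp
  finally have e1: "(?j + s) mod k = i" .
  show "b ?j \<in> Ls i" using g jk e1 unfolding goodch_def by metis
  have "(?j + 1) mod k = ((i + 1) mod k + (k - s)) mod k" by (simp add: mod_simps ac_simps)
  then show "b ?j \<noteq> b (((i + 1) mod k + (k - s)) mod k)" using g jk unfolding goodch_def by metis
qed

lemma choice2:
  assumes ev: "even k" and k: "2 \<le> k" and c: "\<forall>i<k. 2 \<le> card (Ls i)"
  shows "\<exists>a. goodch k Ls a"
proof (cases "\<exists>j<k. \<not> Ls ((j+1) mod k) \<subseteq> Ls j")
  case True
  then obtain j x where j: "j < k" and x: "x \<in> Ls ((j+1) mod k)" "x \<notin> Ls j" by blast
  define s where "s = (j + 1) mod k"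
  have s: "s < k" using k unfolding s_def by simp
  define M where "M = (\<lambda>i. Ls ((i + s) mod k))"
  have cM: "\<And>i. i < k \<Longrightarrow> 2 \<le> card (M i)" unfolding M_def using c k by simp
  have x0: "x \<in> M 0" unfolding M_def s_def using x k by simp
  have Mk: "M (k - 1) = Ls j"
  proof -
    have "(k - 1 + s) mod k = (k - 1 + (j + 1)) mod k" unfolding s_def by (simp add: mod_simps)
    also have "\<dots> = (j + k) mod k" using k by simp
    also have "\<dots> = j" using j by simp
    finally show ?thesis unfolding M_def by simp
  qed
  define Q where "Q = (\<lambda>i y z. (Suc i < k \<longrightarrow> z \<in> M (Suc i)) \<and> z \<noteq> y)"
  define b where "b = greedy x Q"
  have ex: "\<And>i y. \<exists>z. Q i y z"
  proof -
    fix i y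
    show "\<exists>z. Q i y z"
    proof (cases "Suc i < k")
      case True
      then obtain z where "z \<in> M (Suc i)" "z \<noteq> y" using card2_other[OF cM[of "Suc i"], of y] by blast
      then show ?thesis unfolding Q_def by blast
    next
      case False
      have "0 < k" using k by simp
      then obtain z where "z \<in> M 0" "z \<noteq> y" using card2_other[OF cM[of 0], of y] by blast
      then show ?thesis unfolding Q_def using False by blast
    qed
  qed
  have st: "\<And>i. Q i (b i) (b (Suc i))" unfolding b_def by (rule greedy_step[OF ex])
  have mem: "\<And>i. i < k \<Longrightarrow> b i \<in> M i"
  proof -
    fix i assume "i < k"
    then show "b i \<in> M i" using st x0 unfolding Q_def b_def by (cases i) auto
  qed
  have "goodch k M b" unfolding goodch_def
  proof (intro allI impI conjI)
    fix i assume i: "i < k"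
    show "b i \<in> M i" using mem i .
    show "b i \<noteq> b ((i+1) mod k)"
    proof (cases "i + 1 < k")
      case True
      then show ?thesis using st[of i] unfolding Q_def by auto
    next
      case False
      then have i1: "i = k - 1" using i by simp
      have "b i \<in> Ls j" using mem[OF i] Mk i1 by simp
      moreover have "b 0 = x" unfolding b_def by simp
      ultimately show ?thesis using x(2) i1 k by auto
    qed
  qed
  then have "goodch k Ls (\<lambda>i. b ((i + (k - s)) mod k))" using rot_choice[OF s] unfolding M_def by blast
  then show ?thesis by blast
next
  case False
  then have inc: "\<And>j. j < k \<Longrightarrow> Ls ((j+1) mod k) \<subseteq> Ls j" by blast
  have chain: "\<And>i m. i + m \<le> k - 1 \<Longrightarrow> Ls (i + m) \<subseteq> Ls i"
  proof -
    fix i m show "i + m \<le> k - 1 \<Longrightarrow> Ls (i + m) \<subseteq> Ls i"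
    proof (induction m)
      case 0 then show ?case by simp
    next
      case (Suc m)
      have "Ls ((i + m + 1) mod k) \<subseteq> Ls (i + m)" using inc[of "i+m"] Suc.prems k by simp
      moreover have "(i + m + 1) mod k = i + Suc m" using Suc.prems k by simp
      ultimately show ?case using Suc by auto
    qed
  qed
  have l0: "Ls 0 \<subseteq> Ls (k - 1)"
  proof -
    have "(k - 1 + 1) mod k = 0" using k by simp
    then show ?thesis using inc[of "k - 1"] k by simp
  qed
  have all: "\<And>i. i < k \<Longrightarrow> Ls 0 \<subseteq> Ls i"
  proof -
    fix i assume "i < k"
    then have "Ls (i + (k - 1 - i)) \<subseteq> Ls i" using chain[of i "k - 1 - i"] by simp
    moreover have "i + (k - 1 - i) = k - 1" using \<open>i < k\<close> by simp
    ultimately show "Ls 0 \<subseteq> Ls i" using l0 by auto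
  qed
  have c0: "2 \<le> card (Ls 0)" using c k by simp
  obtain p where p: "p \<in> Ls 0" using card2_other[OF c0, of undefined] by blast
  obtain q where q: "q \<in> Ls 0" "q \<noteq> p" using card2_other[OF c0, of p] by blast
  define a where "a = (\<lambda>i::nat. if even i then p else q)"
  have "goodch k Ls a" unfolding goodch_def
  proof (intro allI impI conjI)
    fix i assume i: "i < k"
    show "a i \<in> Ls i" using all[OF i] p q unfolding a_def by auto
    show "a i \<noteq> a ((i+1) mod k)"
    proof (cases "i + 1 < k")
      case True
      then show ?thesis using q unfolding a_def by auto
    next
      case False
      then have "i + 1 = k" using i by simp
      then show ?thesis using ev q unfolding a_def by auto
    qed
  qed
  then show ?thesis by blast
qed



fun ws :: "('a \<Rightarrow> 'a set) \<Rightarrow> 'a \<Rightarrow> nat \<Rightarrow> 'a" where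
  "ws N x 0 = x"
| "ws N x (Suc 0) = (SOME y. y \<in> N x)"
| "ws N x (Suc (Suc n)) = (SOME z. z \<in> N (ws N x (Suc n)) \<and> z \<noteq> ws N x n)"

lemma card2_eq: "card A = 2 \<Longrightarrow> a \<in> A \<Longrightarrow> b \<in> A \<Longrightarrow> a \<noteq> b \<Longrightarrow> A = {a, b}"
proof -
  assume c: "card A = 2" and ab: "a \<in> A" "b \<in> A" "a \<noteq> b"
  have fin: "finite A" using c by (metis card.infinite zero_neq_numeral)
  have "{a, b} \<subseteq> A" using ab by auto
  moreover have "card {a, b} = card A" using ab c by simp
  ultimately show "A = {a, b}" using fin by (metis card_subset_eq)
qed

definition cycgood :: "('a \<Rightarrow> 'a set) \<Rightarrow> 'a set \<Rightarrow> 'a list \<Rightarrow> bool" where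
  "cycgood N X c \<longleftrightarrow> distinct c \<and> 2 \<le> length c \<and> set c \<subseteq> X \<and>
     (\<forall>i<length c. c ! ((i+1) mod length c) \<in> N (c ! i)) \<and> (card (N (hd c)) = 2 \<longrightarrow> 3 \<le> length c)"

locale reg12 =
  fixes X :: "'a set" and N :: "'a \<Rightarrow> 'a set"
  assumes finX: "finite X"
    and symN: "\<And>x y. y \<in> N x \<Longrightarrow> x \<in> N y"
    and irr: "\<And>x. x \<notin> N x"
    and reg: "\<And>x. x \<in> X \<Longrightarrow> (card (N x) = 1 \<or> card (N x) = 2) \<and> (\<forall>y\<in>N x. card (N y) = card (N x))"
begin

lemma cycle_deg1:
  assumes xY: "x \<in> Y" and YX: "Y \<subseteq> X" and clo: "\<forall>y\<in>Y. N y \<subseteq> Y" and d: "card (N x) = 1"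
  shows "\<exists>c. cycgood N X c \<and> x \<in> set c \<and> set c \<subseteq> Y \<and> (\<forall>z\<in>set c. N z \<subseteq> set c)"
proof -
  obtain y where Nx: "N x = {y}" using d by (metis card_1_singletonE)
  have yY: "y \<in> Y" using clo xY Nx by auto
  have "card (N y) = 1" using reg[of x] xY YX Nx d by auto
  moreover have "x \<in> N y" using symN Nx by auto
  ultimately have Ny: "N y = {x}" by (metis card_1_singletonE singletonD)
  have xy: "x \<noteq> y" using irr Nx by auto
  let ?c = "[x, y]"
  have "cycgood N X ?c" unfolding cycgood_def
  proof (intro conjI)
    show "distinct ?c" using xy by simp
    show "2 \<le> length ?c" by simp
    show "set ?c \<subseteq> X" using xY yY YX by auto
    show "\<forall>i<length ?c. ?c ! ((i + 1) mod length ?c) \<in> N (?c ! i)"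
    proof (intro allI impI)
      fix i assume "i < length ?c"
      then have "i = 0 \<or> i = 1" by auto
      then show "?c ! ((i + 1) mod length ?c) \<in> N (?c ! i)" using Nx Ny by auto
    qed
    show "card (N (hd ?c)) = 2 \<longrightarrow> 3 \<le> length ?c" using d by simp
  qed
  moreover have "\<forall>z\<in>set ?c. N z \<subseteq> set ?c" using Nx Ny by auto
  ultimately show ?thesis using xY yY by (intro exI[of _ "[x, y]"]) auto
qed

lemma cycle_deg2:
  assumes xY: "x \<in> Y" and YX: "Y \<subseteq> X" and clo: "\<forall>y\<in>Y. N y \<subseteq> Y" and d: "card (N x) = 2"
  shows "\<exists>c. cycgood N X c \<and> x \<in> set c \<and> set c \<subseteq> Y \<and> (\<forall>z\<in>set c. N z \<subseteq> set c)"
proof -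
  define s where "s = ws N x"
  have s0: "s 0 = x" unfolding s_def by simp
  have s2: "\<And>n. card (N (s (Suc n))) = 2 \<Longrightarrow> s (Suc (Suc n)) \<in> N (s (Suc n)) \<and> s (Suc (Suc n)) \<noteq> s n"
  proof -
    fix n assume "card (N (s (Suc n))) = 2"
    then have "\<exists>z. z \<in> N (s (Suc n)) \<and> z \<noteq> s n" using card2_other[of "N (s (Suc n))" "s n"] by auto
    then have "(SOME z. z \<in> N (s (Suc n)) \<and> z \<noteq> s n) \<in> N (s (Suc n)) \<and> (SOME z. z \<in> N (s (Suc n)) \<and> z \<noteq> s n) \<noteq> s n"
      by (rule someI_ex)
    then show "s (Suc (Suc n)) \<in> N (s (Suc n)) \<and> s (Suc (Suc n)) \<noteq> s n"
      unfolding s_def by simp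
  qed
  have A: "\<And>n. s n \<in> Y \<and> card (N (s n)) = 2 \<and> s (Suc n) \<in> N (s n)"
  proof -
    fix n show "s n \<in> Y \<and> card (N (s n)) = 2 \<and> s (Suc n) \<in> N (s n)"
    proof (induction n)
      case 0
      have "N x \<noteq> {}" using d by auto
      then have "s 1 \<in> N x" unfolding s_def by (simp add: some_in_eq)
      then show ?case using s0 xY d by simp
    next
      case (Suc n)
      have i1: "s (Suc n) \<in> Y" using Suc clo by auto
      have "card (N (s (Suc n))) = card (N (s n))" using Suc reg[of "s n"] YX by auto
      then have c2: "card (N (s (Suc n))) = 2" using Suc by simp
      then show ?case using i1 s2[OF c2] by simp
    qed
  qed
  have B: "\<And>n. s (Suc (Suc n)) \<noteq> s n" using s2 A by blast
  have C: "\<And>n. N (s (Suc n)) = {s n, s (Suc (Suc n))}"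
  proof -
    fix n
    have "s n \<in> N (s (Suc n))" using A symN by blast
    then show "N (s (Suc n)) = {s n, s (Suc (Suc n))}" using card2_eq A B by metis
  qed
  have "\<not> inj s"
  proof
    assume "inj s"
    moreover have "range s \<subseteq> Y" using A by auto
    moreover have "finite Y" using YX finX finite_subset by blast
    ultimately show False by (metis finite_imageD finite_subset infinite_UNIV_nat)
  qed
  then have exr: "\<exists>j. \<exists>i<j. s i = s j" unfolding inj_def by (metis linorder_neqE_nat)
  define k where "k = (LEAST j. \<exists>i<j. s i = s j)"
  obtain i0 where i0: "i0 < k" "s i0 = s k" using LeastI_ex[OF exr] unfolding k_def by blast
  have inj: "\<And>a b. a < b \<Longrightarrow> b < k \<Longrightarrow> s a \<noteq> s b"
    using not_less_Least unfolding k_def by blast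
  have "i0 = 0"
  proof (rule ccontr)
    assume "i0 \<noteq> 0"
    then obtain i' where i': "i0 = Suc i'" by (cases i0) auto
    obtain j' where j': "k = Suc j'" using i0 by (cases k) auto
    have "s k \<in> N (s j')" using A j' by simp
    then have "s j' \<in> N (s i0)" using symN i0 by simp
    then have "s j' = s i' \<or> s j' = s (Suc (Suc i'))" using C i' by auto
    then show False
    proof
      assume "s j' = s i'"
      then show False using inj[of i' j'] i' j' i0 by auto
    next
      assume e: "s j' = s (Suc (Suc i'))"
      consider "Suc (Suc i') < j'" | "Suc (Suc i') = j'" | "j' < Suc (Suc i')" by arith
      then show False
      proof cases
        case 1 then show False using inj[of "Suc (Suc i')" j'] e j' by auto
      next
        case 2 then show False using B[of i0] i' j' i0 by simp
      next
        case 3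
        then have "k = Suc i0" using i' j' i0 by auto
        then show False using A[of i0] irr i0 by metis
      qed
    qed
  qed
  then have sk: "s k = x" using i0 s0 by simp
  have k3: "3 \<le> k"
  proof -
    have "k \<noteq> 0" using i0 by auto
    moreover have "k \<noteq> 1"
    proof
      assume "k = 1"
      then have "s (Suc 0) = s 0" using sk s0 by simp
      moreover have "s (Suc 0) \<in> N (s 0)" using A[of 0] by simp
      ultimately show False using irr[of "s 0"] by simp
    qed
    moreover have "k \<noteq> 2"
    proof
      assume "k = 2"
      then have "s (Suc (Suc 0)) = s 0" using sk s0 by (simp add: numeral_2_eq_2)
      then show False using B[of 0] by simp
    qed
    ultimately show ?thesis by arith
  qed
  define c where "c = map s [0..<k]"
  have lenc: "length c = k" unfolding c_def by simp
  have cn: "\<And>i. i < k \<Longrightarrow> c ! i = s i" unfolding c_def by simp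
  have setc: "set c = s ` {0..<k}" unfolding c_def by simp
  have dc: "distinct c" unfolding c_def
  proof (rule distinct_map[THEN iffD2], intro conjI)
    show "distinct [0..<k]" by simp
    show "inj_on s (set [0..<k])"
    proof (rule inj_onI)
      fix a b assume ab: "a \<in> set [0..<k]" "b \<in> set [0..<k]" "s a = s b"
      then have "a < k" "b < k" by auto
      then show "a = b" using inj[of a b] inj[of b a] ab(3) by (cases a b rule: linorder_cases) auto
    qed
  qed
  have adj: "\<And>i. i < k \<Longrightarrow> c ! ((i+1) mod k) = s (Suc i)"
  proof -
    fix i assume i: "i < k"
    show "c ! ((i+1) mod k) = s (Suc i)"
    proof (cases "i + 1 < k")
      case True then show ?thesis using cn by simp
    next
      case False
      then have "i + 1 = k" using i by simp
      then show ?thesis using cn sk s0 k3 by simp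
    qed
  qed
  have sub: "set c \<subseteq> Y" using setc A by auto
  have closed: "\<forall>z\<in>set c. N z \<subseteq> set c"
  proof
    fix z assume "z \<in> set c"
    then obtain i where i: "i < k" "z = s i" using setc by auto
    show "N z \<subseteq> set c"
    proof (cases i)
      case 0
      have a1: "s 1 \<in> N x" using A[of 0] s0 by simp
      have sk1: "Suc (k - 1) = k" using k3 by simp
      have "s (Suc (k - 1)) \<in> N (s (k - 1))" using A[of "k - 1"] by blast
      then have "s k \<in> N (s (k - 1))" using sk1 by simp
      then have a2: "s (k - 1) \<in> N x" using symN sk by metis
      have "s 1 \<noteq> s (k - 1)" using inj[of 1 "k - 1"] k3 by auto
      then have "N x = {s 1, s (k - 1)}" using card2_eq d a1 a2 by metis
      moreover have "s 1 \<in> set c" "s (k - 1) \<in> set c" using setc k3 by auto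
      ultimately show ?thesis using i 0 s0 by auto
    next
      case (Suc i')
      have "N z = {s i', s (Suc i)}" using C[of i'] i Suc by simp
      moreover have "s i' \<in> set c" using setc i Suc by auto
      moreover have "s (Suc i) \<in> set c"
      proof (cases "Suc i < k")
        case True then show ?thesis using setc by auto
      next
        case False then have "Suc i = k" using i by simp
        then have "s (Suc i) = s 0" using sk s0 by simp
        moreover have "s 0 \<in> set c" using setc k3 by simp
        ultimately show ?thesis by simp
      qed
      ultimately show ?thesis by auto
    qed
  qed
  have "cycgood N X c" unfolding cycgood_def
  proof (intro conjI)
    show "distinct c" using dc .
    show "2 \<le> length c" using lenc k3 by simp
    show "set c \<subseteq> X" using sub YX by auto
    show "\<forall>i<length c. c ! ((i + 1) mod length c) \<in> N (c ! i)"
      using adj cn A lenc by simp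
    show "card (N (hd c)) = 2 \<longrightarrow> 3 \<le> length c" using lenc k3 by simp
  qed
  moreover have "x \<in> set c" using setc s0 k3 by force
  ultimately show ?thesis using sub closed by blast
qed

lemma cycle_exists:
  assumes xY: "x \<in> Y" and YX: "Y \<subseteq> X" and clo: "\<forall>y\<in>Y. N y \<subseteq> Y"
  shows "\<exists>c. cycgood N X c \<and> x \<in> set c \<and> set c \<subseteq> Y \<and> (\<forall>z\<in>set c. N z \<subseteq> set c)"
  using reg[of x] xY YX cycle_deg1[OF assms] cycle_deg2[OF assms] by auto

lemma decomp:
  "Y \<subseteq> X \<Longrightarrow> (\<forall>y\<in>Y. N y \<subseteq> Y) \<Longrightarrow>
   \<exists>C. finite C \<and> (\<forall>c\<in>C. cycgood N X c \<and> set c \<subseteq> Y) \<and> (\<forall>y\<in>Y. \<exists>!c\<in>C. y \<in> set c)"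
proof (induction "card Y" arbitrary: Y rule: less_induct)
  case less
  show ?case
  proof (cases "Y = {}")
    case True
    then show ?thesis by (intro exI[of _ "{}"]) auto
  next
    case False
    then obtain x where xY: "x \<in> Y" by blast
    obtain c where c: "cycgood N X c" "x \<in> set c" "set c \<subseteq> Y" "\<forall>z\<in>set c. N z \<subseteq> set c"
      using cycle_exists[OF xY less.prems] by blast
    define Y' where "Y' = Y - set c"
    have finY: "finite Y" using less.prems finX finite_subset by blast
    have lt: "card Y' < card Y" unfolding Y'_def using c(2) c(3) xY finY
      by (metis Diff_subset card_seteq empty_iff psubsetI psubset_card_mono Diff_iff)
    have Y'X: "Y' \<subseteq> X" using less.prems unfolding Y'_def by auto
    have cloY': "\<forall>y\<in>Y'. N y \<subseteq> Y'"
    proof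
      fix y assume yY': "y \<in> Y'"
      show "N y \<subseteq> Y'"
      proof
        fix w assume w: "w \<in> N y"
        have "w \<in> Y" using less.prems(2) yY' w unfolding Y'_def by auto
        moreover have "w \<notin> set c"
        proof
          assume "w \<in> set c"
          then have "y \<in> set c" using c(4) symN w by blast
          then show False using yY' unfolding Y'_def by simp
        qed
        ultimately show "w \<in> Y'" unfolding Y'_def by simp
      qed
    qed
    obtain C' where C': "finite C'" "\<forall>c\<in>C'. cycgood N X c \<and> set c \<subseteq> Y'" "\<forall>y\<in>Y'. \<exists>!c\<in>C'. y \<in> set c"
      using less.hyps[OF lt Y'X cloY'] by blast
    have cnot: "c \<notin> C'" using C'(2) c(2) xY unfolding Y'_def by auto
    have "\<forall>y\<in>Y. \<exists>!c'\<in>insert c C'. y \<in> set c'"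
    proof
      fix y assume yY: "y \<in> Y"
      show "\<exists>!c'\<in>insert c C'. y \<in> set c'"
      proof (cases "y \<in> set c")
        case True
        have "\<And>c'. c' \<in> C' \<Longrightarrow> y \<notin> set c'" using C'(2) True unfolding Y'_def by auto
        then show ?thesis using True by blast
      next
        case False
        then have "y \<in> Y'" using yY unfolding Y'_def by simp
        then have "\<exists>!c'\<in>C'. y \<in> set c'" using C'(3) by blast
        then show ?thesis using False by auto
      qed
    qed
    moreover have "\<forall>c'\<in>insert c C'. cycgood N X c' \<and> set c' \<subseteq> Y" using c C'(2) unfolding Y'_def by auto
    ultimately show ?thesis using C'(1) by (intro exI[of _ "insert c C'"]) auto
  qed
qed

end



lemma L_props:
  assumes cases: "((\<forall>v\<in>V. hdeg E inc v \<le> 2) \<and> L = intersection_graph inc)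
             \<or> (L = intersection_graph_star 2 inc \<and> bipartite E L)
             \<or> L = intersection_graph_star 3 inc"
  shows "\<forall>x y. L x y \<longrightarrow> L y x" "\<forall>x. \<not> L x x"
  using cases by (auto simp: intersection_graph_def intersection_graph_star_def Int_commute)

lemma bip_even:
  assumes bp: "bipartite E L" and sub: "set c \<subseteq> E" and k: "2 \<le> length c"
    and adj: "\<forall>i<length c. L (c!i) (c!((i+1) mod length c))"
  shows "even (length c)"
proof -
  let ?k = "length c"
  obtain A where A: "A \<subseteq> E" "\<forall>x\<in>E. \<forall>y\<in>E. L x y \<longrightarrow> (x \<in> A \<longleftrightarrow> y \<notin> A)"
    using bp unfolding bipartite_def by blast
  have inE: "\<And>i. i < ?k \<Longrightarrow> c!i \<in> E" using sub by auto
  have P: "\<And>i. i < ?k \<Longrightarrow> (c!i \<in> A \<longleftrightarrow> (c!0 \<in> A \<longleftrightarrow> even i))"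
  proof -
    fix i show "i < ?k \<Longrightarrow> (c!i \<in> A \<longleftrightarrow> (c!0 \<in> A \<longleftrightarrow> even i))"
    proof (induction i)
      case 0 then show ?case by simp
    next
      case (Suc i)
      have "L (c!i) (c!(Suc i))" using adj[rule_format, of i] Suc.prems by simp
      moreover have "c!i \<in> E" "c!(Suc i) \<in> E" using inE Suc.prems by auto
      ultimately have "c!i \<in> A \<longleftrightarrow> c!(Suc i) \<notin> A" using A(2) by blast
      then show ?case using Suc by auto
    qed
  qed
  have "L (c!(?k - 1)) (c!0)"
  proof -
    have "?k - 1 + 1 = ?k" using k by simp
    then have "(?k - 1 + 1) mod ?k = 0" by simp
    then show ?thesis using adj[rule_format, of "?k - 1"] k by simp
  qed
  moreover have "0 < ?k" "?k - 1 < ?k" using k by (cases c; simp)+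
  then have "c!(?k - 1) \<in> E" "c!0 \<in> E" using inE by blast+
  ultimately have "c!(?k - 1) \<in> A \<longleftrightarrow> c!0 \<notin> A" using A(2) by blast
  moreover have km: "?k - 1 < ?k" using k by linarith
  ultimately have "odd (?k - 1)" using P[OF km] by auto
  then show ?thesis using k by simp
qed

lemma mod_ne3:
  assumes "3 \<le> (k::nat)" "i < k"
  shows "i \<noteq> (i+1) mod k" "i \<noteq> (i+2) mod k" "(i+1) mod k \<noteq> (i+2) mod k"
proof -
  have a: "i + 2 < k \<Longrightarrow> (i+1) mod k = i + 1 \<and> (i+2) mod k = i + 2" by simp
  have b: "i + 2 = k \<Longrightarrow> (i+1) mod k = i + 1 \<and> (i+2) mod k = 0" by simp
  have c: "i + 1 = k \<Longrightarrow> (i+1) mod k = 0 \<and> (i+2) mod k = 1" using assms(1) by (auto simp: mod_Suc)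
  have "i + 2 < k \<or> i + 2 = k \<or> i + 1 = k" using assms by linarith
  then show "i \<noteq> (i+1) mod k" "i \<noteq> (i+2) mod k" "(i+1) mod k \<noteq> (i+2) mod k"
    using a b c assms by auto
qed

lemma anch_exists:
  assumes H: "hypergraph V E inc"
    and cases: "((\<forall>v\<in>V. hdeg E inc v \<le> 2) \<and> L = intersection_graph inc)
             \<or> (L = intersection_graph_star 2 inc \<and> bipartite E L)
             \<or> L = intersection_graph_star 3 inc"
    and d: "distinct c" and k: "2 \<le> length c" and sub: "set c \<subseteq> E"
    and adj: "\<forall>i<length c. L (c!i) (c!((i+1) mod length c))"
    and alt: "3 \<le> length c \<or> (L = intersection_graph_star 2 inc \<and> bipartite E L) \<or> L = intersection_graph_star 3 inc"
  shows "\<exists>vs. closed_strict_trail V E inc vs c"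
proof -
  let ?k = "length c"
  define Ls where "Ls = (\<lambda>i. inc (c!i) \<inter> inc (c!((i+1) mod ?k)))"
  have "\<exists>a. goodch ?k Ls a"
  proof (cases "L = intersection_graph_star 3 inc")
    case True
    have "\<forall>i<?k. intersection_graph_star 3 inc (c!i) (c!((i+1) mod ?k))" using adj True by simp
    then have "\<forall>i<?k. 3 \<le> card (Ls i)" unfolding Ls_def intersection_graph_star_def by blast
    then show ?thesis using choice3 k by blast
  next
    case F3: False
    show ?thesis
    proof (cases "L = intersection_graph_star 2 inc \<and> bipartite E L")
      case True
      have "\<forall>i<?k. intersection_graph_star 2 inc (c!i) (c!((i+1) mod ?k))" using adj True by simp
      then have "\<forall>i<?k. 2 \<le> card (Ls i)" unfolding Ls_def intersection_graph_star_def by blast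
      moreover have "even ?k" using bip_even[OF _ sub k adj] True by blast
      ultimately show ?thesis using choice2 k by blast
    next
      case False
      then have k3: "3 \<le> ?k" and dg: "\<forall>v\<in>V. hdeg E inc v \<le> 2" and LI: "L = intersection_graph inc"
        using alt cases F3 by auto
      have ne: "\<And>i. i < ?k \<Longrightarrow> Ls i \<noteq> {}" using adj LI unfolding Ls_def intersection_graph_def by auto
      define a where "a = (\<lambda>i. SOME v. v \<in> Ls i)"
      have am: "\<And>i. i < ?k \<Longrightarrow> a i \<in> Ls i" unfolding a_def using ne by (simp add: some_in_eq)
      have "goodch ?k Ls a" unfolding goodch_def
      proof (intro allI impI conjI)
        fix i assume i: "i < ?k"
        show "a i \<in> Ls i" using am i .
        show "a i \<noteq> a ((i+1) mod ?k)"
        proof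
          assume eq: "a i = a ((i+1) mod ?k)"
          let ?j = "(i+1) mod ?k"
          let ?j2 = "(i+2) mod ?k"
          have kp: "0 < ?k" using i by linarith
          have j: "?j < ?k" using kp by simp
          have j2e: "(?j + 1) mod ?k = ?j2" by (simp add: mod_simps)
          have j2: "?j2 < ?k" using kp by simp
          have v1: "a i \<in> inc (c!i)" "a i \<in> inc (c!?j)" using am[OF i] unfolding Ls_def by auto
          have v2: "a i \<in> inc (c!?j2)" using am[OF j] eq j2e unfolding Ls_def by auto
          have dist: "c!i \<noteq> c!?j" "c!i \<noteq> c!?j2" "c!?j \<noteq> c!?j2"
            using mod_ne3[OF k3 i] d i j j2 by (simp_all add: nth_eq_iff_index_eq)
          have inE: "c!i \<in> E" "c!?j \<in> E" "c!?j2 \<in> E" using sub i j j2 by auto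
          have finE: "finite E" using H by (simp add: hypergraph_def)
          have "{c!i, c!?j, c!?j2} \<subseteq> {e\<in>E. a i \<in> inc e}" using inE v1 v2 by auto
          then have "card {c!i, c!?j, c!?j2} \<le> hdeg E inc (a i)" unfolding hdeg_def
            using finE by (intro card_mono) auto
          moreover have "card {c!i, c!?j, c!?j2} = 3" using dist by simp
          moreover have "a i \<in> V" using v1 inE H unfolding hypergraph_def by blast
          ultimately show False using dg by fastforce
        qed
      qed
      then show ?thesis by blast
    qed
  qed
  then obtain a where a: "goodch ?k Ls a" by blast
  have "closed_strict_trail V E inc (a (?k - 1) # map a [0..<?k]) c"
    using trail_of_cycle[OF H d k sub] a unfolding goodch_def Ls_def by auto
  then show ?thesis by blast
qed



lemma cycles_to_qe:
  assumes H: "hypergraph V E inc"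
    and cases: "((\<forall>v\<in>V. hdeg E inc v \<le> 2) \<and> L = intersection_graph inc)
             \<or> (L = intersection_graph_star 2 inc \<and> bipartite E L)
             \<or> L = intersection_graph_star 3 inc"
    and fC: "finite C"
    and cyc: "\<forall>c\<in>C. distinct c \<and> 2 \<le> length c \<and> set c \<subseteq> E \<and>
                 (\<forall>i<length c. L (c!i) (c!((i+1) mod length c))) \<and>
                 (3 \<le> length c \<or> (L = intersection_graph_star 2 inc \<and> bipartite E L) \<or> L = intersection_graph_star 3 inc)"
    and un: "\<forall>e\<in>E. \<exists>!c\<in>C. e \<in> set c"
  shows "quasi_eulerian V E inc"
proof -
  define tv where "tv = (\<lambda>c. SOME vs. closed_strict_trail V E inc vs c)"
  have tvok: "\<And>c. c \<in> C \<Longrightarrow> closed_strict_trail V E inc (tv c) c"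
  proof -
    fix c assume "c \<in> C"
    then have "\<exists>vs. closed_strict_trail V E inc vs c"
      using anch_exists[OF H cases] cyc by blast
    then show "closed_strict_trail V E inc (tv c) c" unfolding tv_def by (rule someI_ex)
  qed
  define F where "F = (\<lambda>c. (tv c, c)) ` C"
  have "finite F" unfolding F_def using fC by simp
  moreover have "\<forall>(vs, es)\<in>F. closed_strict_trail V E inc vs es" unfolding F_def using tvok by auto
  moreover have "\<forall>e\<in>E. \<exists>!T\<in>F. e \<in> set (snd T)"
  proof
    fix e assume eE: "e \<in> E"
    have ex: "\<exists>!c\<in>C. e \<in> set c" using un eE by blast
    then obtain c where c: "c \<in> C" "e \<in> set c" by blast
    show "\<exists>!T\<in>F. e \<in> set (snd T)"
    proof (rule ex1I[of _ "(tv c, c)"])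
      show "(tv c, c) \<in> F \<and> e \<in> set (snd (tv c, c))" using c unfolding F_def by simp
    next
      fix T assume T: "T \<in> F \<and> e \<in> set (snd T)"
      then obtain c' where c': "c' \<in> C" "T = (tv c', c')" unfolding F_def by blast
      then have "e \<in> set c'" using T by simp
      then have "c' = c" using ex1_beq[OF ex c'(1) _ c(1) c(2)] by blast
      then show "T = (tv c, c)" using c' by simp
    qed
  qed
  ultimately show ?thesis using family_qe by blast
qed

lemma span_decomp:
  assumes finE: "finite E" and symL: "\<forall>x y. L x y \<longrightarrow> L y x" and irrL: "\<forall>x. \<not> L x x"
    and sp: "spanning_edges E L S"
    and rg: "\<forall>x\<in>E. (sdeg S x = 1 \<or> sdeg S x = 2) \<and> (\<forall>y. {x, y} \<in> S \<longrightarrow> sdeg S y = sdeg S x)"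
  shows "\<exists>C. finite C \<and> (\<forall>c\<in>C. distinct c \<and> 2 \<le> length c \<and> set c \<subseteq> E \<and>
            (\<forall>i<length c. L (c!i) (c!((i+1) mod length c))) \<and> (sdeg S (hd c) = 2 \<longrightarrow> 3 \<le> length c))
          \<and> (\<forall>e\<in>E. \<exists>!c\<in>C. e \<in> set c)"
proof -
  define N where "N = (\<lambda>x. {y. {x, y} \<in> S})"
  have NL: "\<And>x y. y \<in> N x \<Longrightarrow> L x y \<and> x \<in> E \<and> y \<in> E"
  proof -
    fix x y assume "y \<in> N x"
    then have "{x, y} \<in> S" unfolding N_def by simp
    then obtain a b where ab: "a \<in> E" "b \<in> E" "L a b" "{x, y} = {a, b}" using sp unfolding spanning_edges_def by blast
    then have "(x = a \<and> y = b) \<or> (x = b \<and> y = a)" by (metis doubleton_eq_iff)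
    then show "L x y \<and> x \<in> E \<and> y \<in> E" using ab symL by auto
  qed
  have sdN: "\<And>x. sdeg S x = card (N x)" unfolding sdeg_def N_def by simp
  interpret reg12 E N
  proof
    show "finite E" using finE .
    show "\<And>x y. y \<in> N x \<Longrightarrow> x \<in> N y" unfolding N_def by (simp add: insert_commute)
    show "\<And>x. x \<notin> N x" using NL irrL by blast
    show "\<And>x. x \<in> E \<Longrightarrow> (card (N x) = 1 \<or> card (N x) = 2) \<and> (\<forall>y\<in>N x. card (N y) = card (N x))"
      using rg unfolding sdN[symmetric] unfolding N_def by simp
  qed
  have clo: "\<forall>y\<in>E. N y \<subseteq> E" using NL by blast
  obtain C where C: "finite C" "\<forall>c\<in>C. cycgood N E c \<and> set c \<subseteq> E" "\<forall>y\<in>E. \<exists>!c\<in>C. y \<in> set c"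
    using decomp[OF order_refl clo] by blast
  have "\<forall>c\<in>C. distinct c \<and> 2 \<le> length c \<and> set c \<subseteq> E \<and>
            (\<forall>i<length c. L (c!i) (c!((i+1) mod length c))) \<and> (sdeg S (hd c) = 2 \<longrightarrow> 3 \<le> length c)"
    using C(2) NL unfolding cycgood_def sdN by blast
  then show ?thesis using C by blast
qed



theorem theorem2p14:
  fixes V :: "'v set" and E :: "'e set" and inc :: "'e \<Rightarrow> 'v set"
    and L :: "'e \<Rightarrow> 'e \<Rightarrow> bool"
  assumes H: "hypergraph V E inc"
    and cases: "((\<forall>v\<in>V. hdeg E inc v \<le> 2) \<and> L = intersection_graph inc)
             \<or> (L = intersection_graph_star 2 inc \<and> bipartite E L)
             \<or> L = intersection_graph_star 3 inc"
  shows "(has_hamilton_cycle E L \<longrightarrow> eulerian V E inc)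
       \<and> (has_2_factor E L \<longrightarrow> quasi_eulerian V E inc)
       \<and> (((L = intersection_graph_star 2 inc \<and> bipartite E L) \<or> L = intersection_graph_star 3 inc)
            \<longrightarrow> has_1_2_regular_spanning E L \<longrightarrow> quasi_eulerian V E inc)"
proof (intro conjI impI)
  have symL: "\<forall>x y. L x y \<longrightarrow> L y x" and irrL: "\<forall>x. \<not> L x x" using L_props[OF cases] by auto
  have finE: "finite E" using H by (simp add: hypergraph_def)
  have spE: "\<And>S x y. spanning_edges E L S \<Longrightarrow> {x, y} \<in> S \<Longrightarrow> y \<in> E"
  proof -
    fix S x y assume sp: "spanning_edges E L S" and xy: "{x, y} \<in> S"
    then obtain a b where ab: "a \<in> E" "b \<in> E" "{x, y} = {a, b}" unfolding spanning_edges_def by blast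
    then show "y \<in> E" by (metis doubleton_eq_iff)
  qed
  {
    assume "has_hamilton_cycle E L"
    then obtain cs where cs: "hamilton_cycle E L cs" unfolding has_hamilton_cycle_def by blast
    let ?k = "length cs"
    have k3: "3 \<le> ?k" and d: "distinct cs" and se: "set cs = E"
      and ad1: "\<forall>i < ?k - 1. L (cs ! i) (cs ! Suc i)" and ad2: "L (last cs) (hd cs)"
      using cs unfolding hamilton_cycle_def by auto
    have adj: "\<forall>i<?k. L (cs!i) (cs!((i+1) mod ?k))"
    proof (intro allI impI)
      fix i assume i: "i < ?k"
      show "L (cs!i) (cs!((i+1) mod ?k))"
      proof (cases "i + 1 < ?k")
        case True
        then show ?thesis using ad1 by simp
      next
        case False
        then have ik: "i + 1 = ?k" using i by simp
        have ne: "cs \<noteq> []" using k3 by auto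
        have ieq: "i = ?k - 1" using ik by simp
        have "last cs = cs ! i" using ne unfolding ieq by (simp add: last_conv_nth)
        moreover have "hd cs = cs ! 0" using ne by (simp add: hd_conv_nth)
        ultimately show ?thesis using ad2 ik by simp
      qed
    qed
    obtain vs where "closed_strict_trail V E inc vs cs"
      using anch_exists[OF H cases d _ _ adj] k3 se by auto
    then show "eulerian V E inc" unfolding eulerian_def using se by blast
  }
  {
    assume "has_2_factor E L"
    then obtain S where sp: "spanning_edges E L S" and dg: "\<forall>x\<in>E. sdeg S x = 2"
      unfolding has_2_factor_def by blast
    have rg: "\<forall>x\<in>E. (sdeg S x = 1 \<or> sdeg S x = 2) \<and> (\<forall>y. {x, y} \<in> S \<longrightarrow> sdeg S y = sdeg S x)"
      using dg spE[OF sp] by metis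
    obtain C where C: "finite C" "\<forall>c\<in>C. distinct c \<and> 2 \<le> length c \<and> set c \<subseteq> E \<and>
            (\<forall>i<length c. L (c!i) (c!((i+1) mod length c))) \<and> (sdeg S (hd c) = 2 \<longrightarrow> 3 \<le> length c)"
        "\<forall>e\<in>E. \<exists>!c\<in>C. e \<in> set c"
      using span_decomp[OF finE symL irrL sp rg] by blast
    have "\<forall>c\<in>C. distinct c \<and> 2 \<le> length c \<and> set c \<subseteq> E \<and>
                 (\<forall>i<length c. L (c!i) (c!((i+1) mod length c))) \<and>
                 (3 \<le> length c \<or> (L = intersection_graph_star 2 inc \<and> bipartite E L) \<or> L = intersection_graph_star 3 inc)"
    proof
      fix c assume c: "c \<in> C"
      then have "c \<noteq> []" using C(2) by auto
      moreover have "set c \<subseteq> E" using C(2) c by blast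
      ultimately have "hd c \<in> E" using hd_in_set by blast
      then have "3 \<le> length c" using C(2) c dg by auto
      then show "distinct c \<and> 2 \<le> length c \<and> set c \<subseteq> E \<and>
                 (\<forall>i<length c. L (c!i) (c!((i+1) mod length c))) \<and>
                 (3 \<le> length c \<or> (L = intersection_graph_star 2 inc \<and> bipartite E L) \<or> L = intersection_graph_star 3 inc)"
        using C(2) c by blast
    qed
    then show "quasi_eulerian V E inc" using cycles_to_qe[OF H cases C(1) _ C(3)] by blast
  }
  {
    assume alt: "(L = intersection_graph_star 2 inc \<and> bipartite E L) \<or> L = intersection_graph_star 3 inc"
      and "has_1_2_regular_spanning E L"
    then obtain S where sp: "spanning_edges E L S"
      and dg: "\<forall>x\<in>E. (\<forall>y. sreach S x y \<longrightarrow> sdeg S y = 1) \<or> (\<forall>y. sreach S x y \<longrightarrow> sdeg S y = 2)"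
      unfolding has_1_2_regular_spanning_def by blast
    have rx: "\<And>x. sreach S x x" unfolding sreach_def by simp
    have ry: "\<And>x y. {x, y} \<in> S \<Longrightarrow> sreach S x y" unfolding sreach_def by (simp add: r_into_rtrancl)
    have rg: "\<forall>x\<in>E. (sdeg S x = 1 \<or> sdeg S x = 2) \<and> (\<forall>y. {x, y} \<in> S \<longrightarrow> sdeg S y = sdeg S x)"
    proof
      fix x assume x: "x \<in> E"
      from dg x have "(\<forall>y. sreach S x y \<longrightarrow> sdeg S y = 1) \<or> (\<forall>y. sreach S x y \<longrightarrow> sdeg S y = 2)" by blast
      then show "(sdeg S x = 1 \<or> sdeg S x = 2) \<and> (\<forall>y. {x, y} \<in> S \<longrightarrow> sdeg S y = sdeg S x)"
        using rx[of x] ry[of x] by metis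
    qed
    obtain C where C: "finite C" "\<forall>c\<in>C. distinct c \<and> 2 \<le> length c \<and> set c \<subseteq> E \<and>
            (\<forall>i<length c. L (c!i) (c!((i+1) mod length c))) \<and> (sdeg S (hd c) = 2 \<longrightarrow> 3 \<le> length c)"
        "\<forall>e\<in>E. \<exists>!c\<in>C. e \<in> set c"
      using span_decomp[OF finE symL irrL sp rg] by blast
    have "\<forall>c\<in>C. distinct c \<and> 2 \<le> length c \<and> set c \<subseteq> E \<and>
                 (\<forall>i<length c. L (c!i) (c!((i+1) mod length c))) \<and>
                 (3 \<le> length c \<or> (L = intersection_graph_star 2 inc \<and> bipartite E L) \<or> L = intersection_graph_star 3 inc)"
      using C(2) alt by blast
    then show "quasi_eulerian V E inc" using cycles_to_qe[OF H cases C(1) _ C(3)] by blast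
  }
qed


end
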